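(* Assume $n$ is even. A line $\ell$ of $\mathrm{PG}(n-1,q)$ has the property that $j(\ell)$ is a line if and only if $\ell\in\mathcal D$. Equivalently, for distinct points $Fa,Fb$, the image under $j$ of the line through $Fa$ and $Fb$ is a line if and only if $F(ab^{-1})=C$.
   Context: Let $q$ be a prime power, $F=\mathbb F_q$, $n\ge 2$ an integer, and $L=\mathbb F_{q^n}\supseteq F$. Regard $L$ as an $n$-dimensional $F$-vector space; $\mathrm{PG}(n-1,q)$ denotes the projective space whose points are the one-dimensional $F$-subspaces $Fx$, $x\in L^*$, and whose lines are the two-dimensional $F$-subspaces (identified with their sets of points). Define $j:\mathrm{PG}(n-1,q)\to\mathrm{PG}(n-1,q)$ by $j(Fx)=Fx^{-1}$. When $n$ is even, $C$ denotes the unique subfield of $L$ of order $q^2$; for $x\in L^*$, $Cx$ is a two-dimensional $F$-subspace of $L$, regarded as a line of $\mathrm{PG}(n-1,q)$, and $\mathcal D=\{Cx: x\in L^*\}$ is the Desarguesian line spread. *)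

theory Defs
  imports Main
begin

text \<open>Subfields of an ambient field 'a (L = F_{q^n} is modelled as a finite field type).\<close>
definition is_subfield :: "'a::field set \<Rightarrow> bool" where
  "is_subfield S \<longleftrightarrow> 0 \<in> S \<and> 1 \<in> S \<and>
     (\<forall>x\<in>S. \<forall>y\<in>S. x + y \<in> S \<and> x * y \<in> S) \<and>
     (\<forall>x\<in>S. - x \<in> S \<and> inverse x \<in> S)"

definition gen_subfield :: "'a::field set \<Rightarrow> 'a \<Rightarrow> 'a set" where
  "gen_subfield S x = \<Inter>{T. is_subfield T \<and> S \<subseteq> T \<and> x \<in> T}"

text \<open>The one-dimensional F-subspace Fx (a point when x \<noteq> 0); more generally K x = {c x | c in K}.\<close>
definition smul_set :: "'a::field set \<Rightarrow> 'a \<Rightarrow> 'a set" where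
  "smul_set K x = {c * x | c. c \<in> K}"

definition span2 :: "'a::field set \<Rightarrow> 'a \<Rightarrow> 'a \<Rightarrow> 'a set" where
  "span2 F a b = {c * a + d * b | c d. c \<in> F \<and> d \<in> F}"

definition pts_of :: "'a::field set \<Rightarrow> 'a set \<Rightarrow> 'a set set" where
  "pts_of F U = {smul_set F x | x. x \<in> U \<and> x \<noteq> 0}"

definition is_line :: "'a::field set \<Rightarrow> 'a set set \<Rightarrow> bool" where
  "is_line F P \<longleftrightarrow> (\<exists>a b. a \<noteq> 0 \<and> b \<noteq> 0 \<and> smul_set F a \<noteq> smul_set F b \<and>
                        P = pts_of F (span2 F a b))"

text \<open>The map j(Fx) = F x^{-1}: the image of the point Fx under elementwise inversion
  (note inverse 0 = 0 in Isabelle, so inverse ` (F x) = F (x^{-1})), extended to sets of points.\<close>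
definition jpt :: "'a::field set \<Rightarrow> 'a set" where
  "jpt p = inverse ` p"

definition jset :: "'a::field set set \<Rightarrow> 'a set set" where
  "jset P = jpt ` P"

definition desarg_spread :: "'a::field set \<Rightarrow> 'a set \<Rightarrow> 'a set set set" where
  "desarg_spread F C = {pts_of F (smul_set C x) | x. x \<noteq> 0}"

end

theory Submission imports Defs "HOL-Computational_Algebra.Polynomial" begin


lemma roots_card:
  assumes "m \<ge> 2"
  shows "card {x::'a::field. x ^ m = x} \<le> m"
proof -
  define p :: "'a poly" where "p = monom 1 m - [:0,1:]"
  have c: "coeff p m = 1" using assms by (auto simp: p_def coeff_monom coeff_pCons split: nat.splits)
  hence "p \<noteq> 0" by auto
  have d: "degree p \<le> m" unfolding p_def
    using assms by (intro degree_diff_le) (auto simp: degree_monom_le)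
  have "{x::'a. x ^ m = x} = {x. poly p x = 0}" by (auto simp: p_def poly_monom)
  thus ?thesis using card_poly_roots_bound[OF \<open>p \<noteq> 0\<close>] d by simp
qed

lemma lagrange:
  fixes S :: "'a::{field,finite} set"
  assumes cl: "\<And>x y. x \<in> S \<Longrightarrow> y \<in> S \<Longrightarrow> x * y \<in> S" and x: "x \<in> S" and z: "0 \<in> S"
  shows "x ^ card S = x"
proof (cases "x = 0")
  case True
  have "card S > 0" using z by (auto simp: card_gt_0_iff)
  thus ?thesis using True by simp
next
  case False
  let ?S = "S - {0}"
  have bij: "bij_betw (\<lambda>y. x * y) ?S ?S"
  proof (rule bij_betw_imageI)
    show "inj_on ((*) x) ?S" using False by (auto simp: inj_on_def)
    hence "card ((*) x ` ?S) = card ?S" by (rule card_image)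
    moreover have "(*) x ` ?S \<subseteq> ?S" using False cl x by auto
    ultimately show "(*) x ` ?S = ?S" by (simp add: card_subset_eq)
  qed
  have "prod (\<lambda>y. x * y) ?S = prod (\<lambda>y. y) ?S"
    using prod.reindex_bij_betw[OF bij, of "\<lambda>y. y"] by simp
  moreover have "prod (\<lambda>y. x * y) ?S = x ^ card ?S * prod (\<lambda>y. y) ?S"
    by (simp add: prod.distrib)
  moreover have "prod (\<lambda>y. y) ?S \<noteq> 0" by simp
  ultimately have "x ^ card ?S = 1" by simp
  moreover have "card S = Suc (card ?S)" using z
    by (metis card_Suc_Diff1 finite)
  ultimately show ?thesis by simp
qed

lemma subfield_roots:
  fixes S :: "'a::{field,finite} set"
  assumes cl: "\<And>x y. x \<in> S \<Longrightarrow> y \<in> S \<Longrightarrow> x * y \<in> S" and z: "0 \<in> S" and m: "card S = m" "m \<ge> 2"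
  shows "S = {x. x ^ m = x}"
proof -
  have sub: "S \<subseteq> {x. x ^ m = x}" using lagrange[OF cl _ z] m by auto
  show ?thesis using card_subset_eq[OF _ sub] roots_card[OF m(2), where 'a='a] m sub
    by (metis card_mono finite le_antisym)
qed




context
  fixes F :: "'a::{field,finite} set"
  assumes F_sub: "is_subfield F"
begin

lemma F0: "0 \<in> F" and F1: "1 \<in> F"
  and Fadd: "x \<in> F \<Longrightarrow> y \<in> F \<Longrightarrow> x + y \<in> F"
  and Fmul: "x \<in> F \<Longrightarrow> y \<in> F \<Longrightarrow> x * y \<in> F"
  and Fneg: "x \<in> F \<Longrightarrow> - x \<in> F"
  and Finv: "x \<in> F \<Longrightarrow> inverse x \<in> F"
  using F_sub by (auto simp: is_subfield_def)

lemma Fsub: "x \<in> F \<Longrightarrow> y \<in> F \<Longrightarrow> x - y \<in> F"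
  using Fadd Fneg by (metis diff_conv_add_uminus)

lemma Fdiv: "x \<in> F \<Longrightarrow> y \<in> F \<Longrightarrow> x / y \<in> F"
  using Fmul Finv by (simp add: divide_inverse)

lemma smul_self: "x \<in> smul_set F x"
  unfolding smul_set_def using F1 by force

lemma smul_eq_iff:
  assumes "a \<noteq> 0" "b \<noteq> 0"
  shows "smul_set F a = smul_set F b \<longleftrightarrow> a * inverse b \<in> F"
proof
  assume "smul_set F a = smul_set F b"
  then obtain c where "c \<in> F" "a = c * b" using smul_self[of a] by (auto simp: smul_set_def)
  thus "a * inverse b \<in> F" using assms by (simp add: mult.assoc)
next
  assume t: "a * inverse b \<in> F"
  let ?t = "a * inverse b"
  have a: "a = ?t * b" using assms by simp
  have t0: "?t \<noteq> 0" using assms by simp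
  show "smul_set F a = smul_set F b"
  proof (auto simp: smul_set_def)
    fix c assume "c \<in> F"
    thus "\<exists>d. c * a = d * b \<and> d \<in> F" using Fmul[OF _ t] a by (intro exI[of _ "c * ?t"]) (auto simp: mult.assoc)
  next
    fix c assume "c \<in> F"
    moreover have "c * b = (c / ?t) * a" using t0 a assms by (simp add: field_simps)
    ultimately show "\<exists>d. c * b = d * a \<and> d \<in> F" using Fdiv[OF _ t] by blast
  qed
qed

lemma smul_mem_eq:
  assumes "y \<in> smul_set F x" "y \<noteq> 0"
  shows "smul_set F y = smul_set F x"
proof -
  obtain c where c: "c \<in> F" "y = c * x" using assms by (auto simp: smul_set_def)
  have "x \<noteq> 0" using assms c by auto
  thus ?thesis using smul_eq_iff[of y x] c assms by (simp add: mult.assoc)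
qed

lemma jpt_smul: "jpt (smul_set F x) = smul_set F (inverse x)"
proof -
  have "inverse ` {c * x |c. c \<in> F} = {c * inverse x |c. c \<in> F}"
  proof
    show "inverse ` {c * x |c. c \<in> F} \<subseteq> {c * inverse x |c. c \<in> F}"
      using Finv by (auto simp: inverse_mult_distrib)
    show "{c * inverse x |c. c \<in> F} \<subseteq> inverse ` {c * x |c. c \<in> F}"
    proof clarify
      fix c assume "c \<in> F"
      hence "c * inverse x = inverse (inverse c * x)" "inverse c \<in> F"
        using Finv by (auto simp: inverse_mult_distrib)
      thus "c * inverse x \<in> inverse ` {c * x |c. c \<in> F}" by blast
    qed
  qed
  thus ?thesis by (simp add: jpt_def smul_set_def)
qed

lemma span_add: "x \<in> span2 F u v \<Longrightarrow> y \<in> span2 F u v \<Longrightarrow> x + y \<in> span2 F u v"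
  unfolding span2_def
proof clarify
  fix c d c' d' assume "c \<in> F" "d \<in> F" "c' \<in> F" "d' \<in> F"
  thus "\<exists>e f. c * u + d * v + (c' * u + d' * v) = e * u + f * v \<and> e \<in> F \<and> f \<in> F"
    using Fadd by (intro exI[of _ "c + c'"] exI[of _ "d + d'"]) (auto simp: algebra_simps)
qed

lemma span_smul: "x \<in> span2 F u v \<Longrightarrow> e \<in> F \<Longrightarrow> e * x \<in> span2 F u v"
  unfolding span2_def
proof clarify
  fix c d assume "c \<in> F" "d \<in> F" "e \<in> F"
  thus "\<exists>c' d'. e * (c * u + d * v) = c' * u + d' * v \<and> c' \<in> F \<and> d' \<in> F"
    using Fmul by (intro exI[of _ "e * c"] exI[of _ "e * d"]) (auto simp: algebra_simps)
qed

lemma span_u: "u \<in> span2 F u v" and span_v: "v \<in> span2 F u v"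
  unfolding span2_def using F0 F1 by force+

lemma span_lin: "x \<in> F \<Longrightarrow> y \<in> F \<Longrightarrow> x * u + y * v \<in> span2 F u v"
  unfolding span2_def by blast

lemma card_span:
  assumes "u \<noteq> 0" "v \<noteq> 0" "u * inverse v \<notin> F"
  shows "card (span2 F u v) = card F ^ 2"
proof -
  have eq: "span2 F u v = (\<lambda>(c,d). c * u + d * v) ` (F \<times> F)"
    unfolding span2_def by auto
  have "inj_on (\<lambda>(c,d). c * u + d * v) (F \<times> F)"
  proof (clarsimp simp: inj_on_def)
    fix c d c' d' assume cd: "c \<in> F" "d \<in> F" "c' \<in> F" "d' \<in> F"
      and e: "c * u + d * v = c' * u + d' * v"
    have e2: "(c - c') * u = (d' - d) * v" using e by (simp add: algebra_simps)
    show "c = c' \<and> d = d'"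
    proof (cases "c = c'")
      case True
      thus ?thesis using e2 assms by simp
    next
      case False
      hence "u * inverse v = (d' - d) / (c - c')" using e2 assms
        by (simp add: field_simps)
      moreover have "(d' - d) / (c - c') \<in> F" using cd by (intro Fdiv Fsub)
      ultimately show ?thesis using assms by simp
    qed
  qed
  thus ?thesis unfolding eq by (simp add: card_image card_cartesian_product power2_eq_square)
qed

lemma pts_mem: "x \<in> U \<Longrightarrow> x \<noteq> 0 \<Longrightarrow> smul_set F x \<in> pts_of F U"
  unfolding pts_of_def by blast

end



lemma jset_pts: "jset (pts_of F U) = pts_of F (inverse ` U)"
  if "is_subfield F" for F :: "'a::{field,finite} set"
proof -
  have "jset (pts_of F U) = {jpt (smul_set F x) |x. x \<in> U \<and> x \<noteq> 0}"
    unfolding jset_def pts_of_def by blast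
  also have "\<dots> = {smul_set F (inverse x) |x. x \<in> U \<and> x \<noteq> 0}"
    using jpt_smul[OF that] by simp
  also have "\<dots> = pts_of F (inverse ` U)"
    unfolding pts_of_def by force
  finally show ?thesis .
qed

lemma span_t1: "span2 F (t * y) y = smul_set (span2 F t 1) y"
  for F :: "'a::field set"
  unfolding span2_def smul_set_def
  apply (auto simp: algebra_simps)
  subgoal for c d by (rule exI[of _ "d + c*t"]) (auto simp: algebra_simps)
  subgoal for c d by blast
  done

context
  fixes F C :: "'a::{field,finite} set"
  assumes F_sub: "is_subfield F" and C_sub: "is_subfield C"
    and C_card: "card C = card F ^ 2"
begin

lemma q2: "card F \<ge> 2"
proof -
  have "{0,1} \<subseteq> F" using F0[OF F_sub] F1[OF F_sub] by auto
  hence "card {0::'a,1} \<le> card F" by (intro card_mono) auto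
  thus ?thesis by simp
qed

lemma FsubC: "F \<subseteq> C"
proof
  fix x assume x: "x \<in> F"
  have Fr: "F = {x. x ^ card F = x}"
    by (rule subfield_roots[of F "card F", OF Fmul[OF F_sub] F0[OF F_sub] refl q2])
  have q4: "card F ^ 2 \<ge> 2" using q2 mult_le_mono[of 2 "card F" 1 "card F"] by (simp add: power2_eq_square)
  have Cr: "C = {x. x ^ (card F ^ 2) = x}"
    by (rule subfield_roots[of C "card F ^ 2", OF Fmul[OF C_sub] F0[OF C_sub] C_card q4])
  have "x ^ card F = x" using x Fr by blast
  hence "x ^ (card F ^ 2) = x" by (simp add: power2_eq_square power_mult)
  thus "x \<in> C" using Cr by blast
qed

lemma span_sub_C: "t \<in> C \<Longrightarrow> span2 F t 1 \<subseteq> C"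
  unfolding span2_def
proof clarify
  fix c d assume "t \<in> C" "c \<in> F" "d \<in> F"
  hence "c \<in> C" "d \<in> C" using FsubC by auto
  thus "c * t + d * 1 \<in> C" using Fmul[OF C_sub, of c t] Fadd[OF C_sub, of "c*t" d] \<open>t \<in> C\<close> by simp
qed

lemma span1t: assumes "t \<in> C" "t \<notin> F" shows "span2 F t 1 = C"
proof -
  have "t \<noteq> 0" using assms F0[OF F_sub] by auto
  hence "card (span2 F t 1) = card C" using card_span[OF F_sub, of t 1] assms C_card by simp
  thus ?thesis using card_subset_eq[OF finite span_sub_C[OF assms(1)]] by simp
qed

lemma quad: assumes "t \<notin> F" "t * t \<in> span2 F t 1" shows "t \<in> C"
proof -
  let ?K = "span2 F t 1"
  obtain g h where gh: "g \<in> F" "h \<in> F" "t * t = g * t + h * 1"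
    using assms unfolding span2_def by blast
  have t0: "t \<noteq> 0" using assms F0[OF F_sub] by auto
  have cl: "x * y \<in> ?K" if xK: "x \<in> ?K" and yK: "y \<in> ?K" for x y
  proof -
    obtain c d where "c \<in> F" "d \<in> F" "x = c * t + d * 1"
      using xK unfolding span2_def by blast
    moreover obtain c' d' where "c' \<in> F" "d' \<in> F" "y = c' * t + d' * 1"
      using yK unfolding span2_def by blast
    ultimately have cd: "c \<in> F" "d \<in> F" "c' \<in> F" "d' \<in> F"
      "x = c * t + d * 1" "y = c' * t + d' * 1" by auto
    have "x * y = c * c' * (t * t) + (c * d' + d * c') * t + d * d'"
      using cd by (simp add: algebra_simps)
    also have "\<dots> = (c * c' * g + (c * d' + d * c')) * t + (c * c' * h + d * d') * 1"
      using gh by (simp add: algebra_simps)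
    moreover have "c * c' * g + (c * d' + d * c') \<in> F" "c * c' * h + d * d' \<in> F"
      using cd gh by (simp_all add: Fmul[OF F_sub] Fadd[OF F_sub])
    ultimately show ?thesis using span_lin[OF F_sub, of _ _ t 1] by (metis mult.right_neutral)
  qed
  have "0 \<in> ?K" using span_lin[OF F_sub, of 0 0 t 1] F0[OF F_sub] by simp
  moreover have ck: "card ?K = card F ^ 2" using card_span[OF F_sub, of t 1] assms t0 by simp
  moreover have q4: "card F ^ 2 \<ge> 2" using q2 mult_le_mono[of 2 "card F" 1 "card F"] by (simp add: power2_eq_square)
  ultimately have "?K = {x. x ^ (card F ^ 2) = x}"
    using subfield_roots[of ?K "card F ^ 2", OF cl] by blast
  moreover have "C = {x. x ^ (card F ^ 2) = x}"
    by (rule subfield_roots[of C "card F ^ 2", OF Fmul[OF C_sub] F0[OF C_sub] C_card q4])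
  ultimately show ?thesis using span_u[OF F_sub, of t 1] by simp
qed

end



context
  fixes F C :: "'a::{field,finite} set"
  assumes F_sub: "is_subfield F" and C_sub: "is_subfield C"
    and C_card: "card C = card F ^ 2"
begin

lemma smulC_closed: "y \<in> smul_set C x \<Longrightarrow> c \<in> F \<Longrightarrow> c * y \<in> smul_set C x"
proof -
  assume "y \<in> smul_set C x" "c \<in> F"
  then obtain e where e: "e \<in> C" "y = e * x" unfolding smul_set_def by blast
  have "c \<in> C" using \<open>c \<in> F\<close> FsubC[OF F_sub C_sub C_card] by blast
  hence "c * e \<in> C" using Fmul[OF C_sub] e(1) by blast
  moreover have "c * y = (c * e) * x" using e by (simp add: mult.assoc)
  ultimately show "c * y \<in> smul_set C x" unfolding smul_set_def by blast
qed

lemma ptsC: "smul_set F z \<in> pts_of F (smul_set C x) \<Longrightarrow> z \<in> smul_set C x"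
proof -
  assume "smul_set F z \<in> pts_of F (smul_set C x)"
  then obtain y where y: "y \<in> smul_set C x" "smul_set F z = smul_set F y"
    unfolding pts_of_def by blast
  then obtain c where "c \<in> F" "z = c * y" using smul_self[OF F_sub, of z] unfolding smul_set_def by auto
  thus ?thesis using smulC_closed[OF y(1)] by simp
qed

lemma desarg_iff:
  assumes a: "a \<noteq> 0" and b: "b \<noteq> 0" and tF: "a * inverse b \<notin> F"
  shows "pts_of F (span2 F a b) \<in> desarg_spread F C \<longleftrightarrow> a * inverse b \<in> C"
proof
  let ?t = "a * inverse b"
  have ab: "a = ?t * b" using b by simp
  assume "?t \<in> C"
  hence eq: "span2 F a b = smul_set C b"
    using span_t1[of F ?t b] ab span1t[OF F_sub C_sub C_card _ tF] by simp
  thus "pts_of F (span2 F a b) \<in> desarg_spread F C"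
    unfolding desarg_spread_def eq using b by blast
next
  assume "pts_of F (span2 F a b) \<in> desarg_spread F C"
  then obtain x where x: "x \<noteq> 0" "pts_of F (span2 F a b) = pts_of F (smul_set C x)"
    unfolding desarg_spread_def by blast
  have "a \<in> smul_set C x" using ptsC pts_mem[OF F_sub span_u[OF F_sub] a] x by metis
  moreover have "b \<in> smul_set C x" using ptsC pts_mem[OF F_sub span_v[OF F_sub] b] x by metis
  ultimately obtain e1 e2 where e: "e1 \<in> C" "e2 \<in> C" "a = e1 * x" "b = e2 * x"
    unfolding smul_set_def by blast
  have "a * inverse b = (e1 * inverse e2) * (x * inverse x)"
    using e by (simp add: inverse_mult_distrib mult_ac)
  hence "a * inverse b = e1 * inverse e2" using x by simp
  thus "a * inverse b \<in> C" using Fmul[OF C_sub] Finv[OF C_sub] e(1,2) by simp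
qed

lemma gen_iff:
  assumes tF: "t \<notin> F"
  shows "gen_subfield F t = C \<longleftrightarrow> t \<in> C"
proof
  assume "gen_subfield F t = C"
  moreover have "t \<in> gen_subfield F t" unfolding gen_subfield_def by (intro InterI) auto
  ultimately show "t \<in> C" by simp
next
  assume tC: "t \<in> C"
  have "C \<in> {T. is_subfield T \<and> F \<subseteq> T \<and> t \<in> T}"
    using C_sub FsubC[OF F_sub C_sub C_card] tC by simp
  hence "gen_subfield F t \<subseteq> C" unfolding gen_subfield_def by (rule Inter_lower)
  moreover have "C \<subseteq> T" if "is_subfield T" "F \<subseteq> T" "t \<in> T" for T
  proof -
    have "span2 F t 1 \<subseteq> T"
    proof
      fix z assume "z \<in> span2 F t 1"
      then obtain c d where cd: "c \<in> F" "d \<in> F" "z = c * t + d * 1" unfolding span2_def by blast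
      have "c \<in> T" "d \<in> T" using cd that(2) by auto
      hence "c * t \<in> T" using Fmul[OF that(1)] that(3) by blast
      thus "z \<in> T" using Fadd[OF that(1)] \<open>d \<in> T\<close> cd(3) by simp
    qed
    thus ?thesis using span1t[OF F_sub C_sub C_card tC tF] by simp
  qed
  hence "C \<subseteq> gen_subfield F t" unfolding gen_subfield_def by (intro Inter_greatest) auto
  ultimately show "gen_subfield F t = C" by (rule subset_antisym)
qed

end



context
  fixes F C :: "'a::{field,finite} set"
  assumes F_sub: "is_subfield F" and C_sub: "is_subfield C"
    and C_card: "card C = card F ^ 2"
begin

lemma line_iff:
  assumes a: "a \<noteq> 0" and b: "b \<noteq> 0" and tF: "a * inverse b \<notin> F"
  shows "is_line F (jset (pts_of F (span2 F a b))) \<longleftrightarrow> a * inverse b \<in> C"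
proof
  let ?t = "a * inverse b"
  have ab: "a = ?t * b" using b by simp
  have t0: "?t \<noteq> 0" using a b by simp
  assume tC: "?t \<in> C"
  have CK: "span2 F ?t 1 = C" using span1t[OF F_sub C_sub C_card tC tF] .
  have eq: "span2 F a b = smul_set C b"
    using span_t1[of F ?t b] ab CK by simp
  let ?ib = "inverse b"
  have "jset (pts_of F (span2 F a b)) = pts_of F (inverse ` smul_set C b)"
    using eq jset_pts[OF F_sub] by simp
  also have "inverse ` smul_set C b = smul_set C ?ib"
    using jpt_smul[OF C_sub, of b] by (simp add: jpt_def)
  also have "\<dots> = span2 F (?t * ?ib) ?ib" using span_t1[of F ?t ?ib] CK by simp
  finally have J: "jset (pts_of F (span2 F a b)) = pts_of F (span2 F (?t * ?ib) ?ib)" .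
  have ne: "smul_set F (?t * ?ib) \<noteq> smul_set F ?ib"
    using smul_eq_iff[OF F_sub, of "?t * ?ib" ?ib] t0 b tF by (simp add: mult.assoc)
  show "is_line F (jset (pts_of F (span2 F a b)))"
    unfolding is_line_def J
    apply (rule exI[of _ "?t * ?ib"], rule exI[of _ ?ib])
    using ne t0 b by (intro conjI refl) simp_all
next
  let ?t = "a * inverse b"
  have ab: "a = ?t * b" using b by simp
  have t0: "?t \<noteq> 0" using a b by simp
  assume "is_line F (jset (pts_of F (span2 F a b)))"
  then obtain u v where uv: "u \<noteq> 0" "v \<noteq> 0" "smul_set F u \<noteq> smul_set F v"
    and J: "jset (pts_of F (span2 F a b)) = pts_of F (span2 F u v)"
    unfolding is_line_def by blast
  let ?W = "span2 F u v"
  have J2: "pts_of F (inverse ` span2 F a b) = pts_of F ?W" using J jset_pts[OF F_sub] by simp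
  have inW: "inverse x \<in> ?W" if "x \<in> span2 F a b" "x \<noteq> 0" for x
  proof -
    have "smul_set F (inverse x) \<in> pts_of F ?W"
      using J2 pts_mem[OF F_sub, of "inverse x" "inverse ` span2 F a b"] that by simp
    then obtain y where y: "y \<in> ?W" "smul_set F (inverse x) = smul_set F y"
      unfolding pts_of_def by blast
    then obtain c where "c \<in> F" "inverse x = c * y"
      using smul_self[OF F_sub, of "inverse x"] unfolding smul_set_def by auto
    thus ?thesis using span_smul[OF F_sub y(1)] by simp
  qed
  have ab0: "a + b \<noteq> 0"
  proof
    assume "a + b = 0"
    hence "?t = - 1" using b by (simp add: field_simps add_eq_0_iff)
    thus False using tF Fneg[OF F_sub F1[OF F_sub]] by simp
  qed
  have t10: "?t + 1 \<noteq> 0" using ab0 ab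
    by (metis distrib_right mult_1 mult_eq_0_iff)
  have ia: "inverse a \<in> ?W" using inW[OF span_u[OF F_sub] a] .
  have ib: "inverse b \<in> ?W" using inW[OF span_v[OF F_sub] b] .
  have iab: "inverse (a + b) \<in> ?W"
    using inW[OF span_add[OF F_sub span_u[OF F_sub] span_v[OF F_sub]] ab0] .
  have sub: "span2 F (inverse a) (inverse b) \<subseteq> ?W"
  proof
    fix z assume "z \<in> span2 F (inverse a) (inverse b)"
    then obtain c d where "c \<in> F" "d \<in> F" "z = c * inverse a + d * inverse b"
      unfolding span2_def by blast
    thus "z \<in> ?W" using span_add[OF F_sub span_smul[OF F_sub ia] span_smul[OF F_sub ib]] by simp
  qed
  have itF: "inverse a * inverse (inverse b) \<notin> F"
  proof
    assume "inverse a * inverse (inverse b) \<in> F"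
    hence "inverse (inverse a * inverse (inverse b)) \<in> F" using Finv[OF F_sub] by blast
    thus False using tF by (simp add: inverse_mult_distrib mult.commute)
  qed
  have uvF: "u * inverse v \<notin> F" using uv smul_eq_iff[OF F_sub] by blast
  have c1: "card (span2 F (inverse a) (inverse b)) = card F ^ 2"
    by (rule card_span[OF F_sub]) (use a b itF in auto)
  have c2: "card ?W = card F ^ 2"
    by (rule card_span[OF F_sub]) (use uv uvF in auto)
  have Weq: "span2 F (inverse a) (inverse b) = ?W"
    using card_subset_eq[OF finite sub] c1 c2 by simp
  have "inverse (a + b) \<in> span2 F (inverse a) (inverse b)" using iab Weq by simp
  then obtain \<alpha> \<beta> where ab_: "\<alpha> \<in> F" "\<beta> \<in> F" "inverse (a + b) = \<alpha> * inverse a + \<beta> * inverse b"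
    unfolding span2_def by blast
  define t where "t = a * inverse b"
  have at: "a = t * b" using b by (simp add: t_def)
  have abt: "a + b = (t + 1) * b" using at by (simp add: algebra_simps)
  have E: "inverse ((t + 1) * b) = \<alpha> * inverse (t * b) + \<beta> * inverse b"
    using ab_(3) unfolding abt[symmetric] at[symmetric] .
  have t0': "t \<noteq> 0" and t10': "t + 1 \<noteq> 0" and tF': "t \<notin> F"
    using t0 t10 tF by (simp_all add: t_def)
  have E2: "t = \<alpha> * (t + 1) + \<beta> * t * (t + 1)"
  proof -
    have E': "inverse (t + 1) * inverse b = (\<alpha> * inverse t + \<beta>) * inverse b"
    proof -
      have E1: "inverse (t + 1) * inverse b = \<alpha> * (inverse t * inverse b) + \<beta> * inverse b"
        using E by (simp only: inverse_mult_distrib)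
      have "(\<alpha> * inverse t + \<beta>) * inverse b = \<alpha> * (inverse t * inverse b) + \<beta> * inverse b"
        by (simp only: distrib_right mult.assoc)
      thus ?thesis using E1 by (rule ssubst)
    qed
    hence E'': "inverse (t + 1) = \<alpha> * inverse t + \<beta>" using b by simp
    have "t = t * (t + 1) * inverse (t + 1)" using t10' by simp
    also have "\<dots> = t * (t + 1) * (\<alpha> * inverse t + \<beta>)" using E'' by simp
    also have "\<dots> = \<alpha> * (t + 1) * (t * inverse t) + \<beta> * t * (t + 1)" by (simp add: algebra_simps)
    also have "\<dots> = \<alpha> * (t + 1) + \<beta> * t * (t + 1)" using t0' by simp
    finally show ?thesis .
  qed
  have "t \<in> C"
  proof (cases "\<beta> = 0")
    case True
    hence E3: "(1 - \<alpha>) * t = \<alpha>" using E2 by (simp add: algebra_simps)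
    show ?thesis
    proof (cases "\<alpha> = 1")
      case True
      thus ?thesis using E3 by simp
    next
      case False
      hence "t = \<alpha> / (1 - \<alpha>)" using E3 by (simp add: field_simps)
      moreover have "\<alpha> / (1 - \<alpha>) \<in> F"
        using Fdiv[OF F_sub ab_(1) Fsub[OF F_sub F1[OF F_sub] ab_(1)]] .
      ultimately show ?thesis using tF' by simp
    qed
  next
    case False
    have "t * t = ((1 - \<alpha> - \<beta>) / \<beta>) * t + (- \<alpha> / \<beta>) * 1"
    proof -
      have B: "\<beta> * (t * t) = (1 - \<alpha> - \<beta>) * t - \<alpha>" using E2 by (simp add: algebra_simps)
      have "t * t = (\<beta> * (t * t)) / \<beta>" using False by simp
      also have "\<dots> = ((1 - \<alpha> - \<beta>) * t - \<alpha>) / \<beta>" using B by simp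
      also have "\<dots> = ((1 - \<alpha> - \<beta>) / \<beta>) * t + (- \<alpha> / \<beta>) * 1"
        using False by (simp add: field_simps)
      finally show ?thesis .
    qed
    moreover have "(1 - \<alpha> - \<beta>) / \<beta> \<in> F"
      using Fdiv[OF F_sub Fsub[OF F_sub Fsub[OF F_sub F1[OF F_sub] ab_(1)] ab_(2)] ab_(2)] .
    moreover have "- \<alpha> / \<beta> \<in> F"
      using Fdiv[OF F_sub Fneg[OF F_sub ab_(1)] ab_(2)] .
    ultimately have "t * t \<in> span2 F t 1" using span_lin[OF F_sub, of _ _ t 1] by metis
    thus ?thesis using quad[OF F_sub C_sub C_card tF'] by blast
  qed
  thus "?t \<in> C" by (simp add: t_def)
qed

end


theorem mainTheorem5:
  fixes F C :: "'a::{field,finite} set" and q n :: nat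
  assumes F_sub: "is_subfield F"
    and q_def: "q = card F"
    and L_card: "card (UNIV :: 'a set) = q ^ n"
    and n_ge: "n \<ge> 2"
    and n_even: "even n"
    and C_sub: "is_subfield C"
    and C_card: "card C = q ^ 2"
  shows "(\<forall>l. is_line F l \<longrightarrow> (is_line F (jset l) \<longleftrightarrow> l \<in> desarg_spread F C)) \<and>
         (\<forall>a b. a \<noteq> 0 \<and> b \<noteq> 0 \<and> smul_set F a \<noteq> smul_set F b \<longrightarrow>
            (is_line F (jset (pts_of F (span2 F a b))) \<longleftrightarrow> gen_subfield F (a * inverse b) = C))"
proof -
  have CC: "card C = card F ^ 2" using C_card q_def by simp
  have tF: "a * inverse b \<notin> F" if "a \<noteq> 0" "b \<noteq> 0" "smul_set F a \<noteq> smul_set F b" for a b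
    using smul_eq_iff[OF F_sub that(1,2)] that(3) by blast
  have P1: "is_line F (jset l) \<longleftrightarrow> l \<in> desarg_spread F C" if lin: "is_line F l" for l
  proof -
    obtain a b where ab: "a \<noteq> 0" "b \<noteq> 0" "smul_set F a \<noteq> smul_set F b"
      "l = pts_of F (span2 F a b)" using lin unfolding is_line_def by blast
    show ?thesis using line_iff[OF F_sub C_sub CC ab(1,2) tF[OF ab(1-3)]]
        desarg_iff[OF F_sub C_sub CC ab(1,2) tF[OF ab(1-3)]] ab(4) by simp
  qed
  have P2: "is_line F (jset (pts_of F (span2 F a b))) \<longleftrightarrow> gen_subfield F (a * inverse b) = C"
    if ab: "a \<noteq> 0" "b \<noteq> 0" "smul_set F a \<noteq> smul_set F b" for a b
    using line_iff[OF F_sub C_sub CC ab(1,2) tF[OF ab]] gen_iff[OF F_sub C_sub CC tF[OF ab]] by simp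
  show ?thesis using P1 P2 by blast
qed

end
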